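(* Let $\mathfrak L$ be a GNN layer of input dimension $p$. Then there is a $\lambda\in\mathbb N_{>0}$ such that for all graphs $G$, all signals $\mathcal x,\mathcal x':V(G)\to\mathbb R^p$, and all vertices $v\in V(G)$, $$\|\tilde{\mathfrak L}(G,\mathcal x)(v)-\tilde{\mathfrak L}(G,\mathcal x')(v)\|_\infty\le\lambda\,\|\mathcal x|_{N[v]}-\mathcal x'|_{N[v]}\|_\infty\max\{\deg(v),1\}\le\lambda\,\|\mathcal x-\mathcal x'\|_\infty|G|.$$
   Context: Graphs are finite, simple, undirected with nonempty vertex set; $N(v)$ is the neighbourhood, $N[v]=N(v)\cup\{v\}$, $\deg(v)=|N(v)|$, $|G|=|V(G)|$. For a signal $\mathcal y$ and $W\subseteq V(G)$, $\|\mathcal y|_W\|_\infty=\max_{w\in W}\|\mathcal y(w)\|_\infty$, and $\|\mathcal y\|_\infty=\|\mathcal y|_{V(G)}\|_\infty$. An FNN has a finite dag skeleton, Lipschitz continuous activation functions $\mathfrak a_v$, real weights and biases; sources are inputs, sinks outputs, a non-input node computes $\mathfrak a_v(b_v+\sum_{uv\in E}w_{uv}\cdot\text{value}(u))$. A GNN layer $\mathfrak L=(\mathrm{msg},\mathrm{agg},\mathrm{comb})$ of input dimension $p$ has $\mathrm{msg}:\mathbb R^{2p}\to\mathbb R^r$, $\mathrm{comb}:\mathbb R^{p+r}\to\mathbb R^q$ computed by FNNs and $\mathrm{agg}$ coordinatewise sum, mean or maximum of finite multisets (value $\mathbf 0$ on the empty multiset); $\tilde{\mathfrak L}(G,\mathcal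 x)(v)=\mathrm{comb}\big(\mathcal x(v),\mathrm{agg}\{\!\{\mathrm{msg}(\mathcal x(v),\mathcal x(w)):w\in N(v)\}\!\}\big)$. *)

theory Defs
  imports "HOL-Analysis.Analysis" "HOL-Library.Multiset"
begin

text \<open>An FNN skeleton is a finite dag whose nodes are numbered 0..<fnn_nodes in a
topological order (every edge u -> v has u < v); the input nodes are 0..<fnn_in
(in this order = order of the input coordinates), the outputs are listed in fnn_outs
(order = order of the output coordinates).\<close>

record fnn =
  fnn_in    :: nat
  fnn_nodes :: nat
  fnn_outs  :: "nat list"
  fnn_edge  :: "nat \<Rightarrow> nat \<Rightarrow> bool"
  fnn_wt    :: "nat \<Rightarrow> nat \<Rightarrow> real"
  fnn_bias  :: "nat \<Rightarrow> real"
  fnn_act   :: "nat \<Rightarrow> real \<Rightarrow> real"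

definition wf_fnn :: "fnn \<Rightarrow> bool" where
  "wf_fnn N \<longleftrightarrow>
     fnn_in N \<le> fnn_nodes N \<and>
     (\<forall>u v. fnn_edge N u v \<longrightarrow> u < v \<and> v < fnn_nodes N) \<and>
     (\<forall>v < fnn_nodes N. (\<not> (\<exists>u. fnn_edge N u v)) \<longleftrightarrow> v < fnn_in N) \<and>
     distinct (fnn_outs N) \<and>
     set (fnn_outs N) = {v. v < fnn_nodes N \<and> \<not> (\<exists>w. fnn_edge N v w)} \<and>
     (\<forall>v. fnn_in N \<le> v \<and> v < fnn_nodes N \<longrightarrow>
        (\<exists>C. C-lipschitz_on UNIV (fnn_act N v)))"

function fnn_val :: "fnn \<Rightarrow> (nat \<Rightarrow> real) \<Rightarrow> nat \<Rightarrow> real" where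
  "fnn_val N x v =
     (if v < fnn_in N then x v
      else fnn_act N v (fnn_bias N v +
             (\<Sum>u\<in>{..<v}. if fnn_edge N u v then fnn_wt N u v * fnn_val N x u else 0)))"
  by auto
termination by (relation "Wellfounded.measure (\<lambda>(N, x, v). v)") auto

definition fnn_eval :: "fnn \<Rightarrow> real list \<Rightarrow> real list" where
  "fnn_eval N xs = map (fnn_val N (\<lambda>i. xs ! i)) (fnn_outs N)"

definition linf :: "real list \<Rightarrow> real" where
  "linf xs = Max (insert 0 (abs ` set xs))"

definition vsub :: "real list \<Rightarrow> real list \<Rightarrow> real list" where
  "vsub xs ys = map2 (-) xs ys"

definition sig_dist :: "'v set \<Rightarrow> ('v \<Rightarrow> real list) \<Rightarrow> ('v \<Rightarrow> real list) \<Rightarrow> real" where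
  "sig_dist W x x' = Max (insert 0 ((\<lambda>w. linf (vsub (x w) (x' w))) ` W))"

definition graph :: "'v set \<Rightarrow> ('v \<Rightarrow> 'v \<Rightarrow> bool) \<Rightarrow> bool" where
  "graph V E \<longleftrightarrow> finite V \<and> V \<noteq> {} \<and> (\<forall>u v. E u v \<longrightarrow> u \<in> V \<and> v \<in> V) \<and>
     (\<forall>u v. E u v \<longrightarrow> E v u) \<and> (\<forall>u. \<not> E u u)"

definition nbrs :: "'v set \<Rightarrow> ('v \<Rightarrow> 'v \<Rightarrow> bool) \<Rightarrow> 'v \<Rightarrow> 'v set" where
  "nbrs V E v = {w \<in> V. E v w}"

definition cnbrs :: "'v set \<Rightarrow> ('v \<Rightarrow> 'v \<Rightarrow> bool) \<Rightarrow> 'v \<Rightarrow> 'v set" where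
  "cnbrs V E v = insert v (nbrs V E v)"

definition deg :: "'v set \<Rightarrow> ('v \<Rightarrow> 'v \<Rightarrow> bool) \<Rightarrow> 'v \<Rightarrow> nat" where
  "deg V E v = card (nbrs V E v)"

definition signal :: "'v set \<Rightarrow> nat \<Rightarrow> ('v \<Rightarrow> real list) \<Rightarrow> bool" where
  "signal V p x \<longleftrightarrow> (\<forall>v\<in>V. length (x v) = p)"

datatype agg_kind = AggSum | AggMean | AggMax

definition agg_apply :: "agg_kind \<Rightarrow> nat \<Rightarrow> real list multiset \<Rightarrow> real list" where
  "agg_apply a r M =
     (if M = {#} then replicate r 0
      else map (\<lambda>i. let C = image_mset (\<lambda>y. y ! i) M in
                 (case a of AggSum \<Rightarrow> sum_mset C
                          | AggMean \<Rightarrow> sum_mset C / real (size C)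
                          | AggMax \<Rightarrow> Max (set_mset C))) [0..<r])"

record gnn_layer =
  gl_msg  :: fnn
  gl_agg  :: agg_kind
  gl_comb :: fnn

definition gl_r :: "gnn_layer \<Rightarrow> nat" where
  "gl_r L = length (fnn_outs (gl_msg L))"

definition gnn_layer_wf :: "nat \<Rightarrow> gnn_layer \<Rightarrow> bool" where
  "gnn_layer_wf p L \<longleftrightarrow> wf_fnn (gl_msg L) \<and> wf_fnn (gl_comb L) \<and>
     fnn_in (gl_msg L) = 2 * p \<and> fnn_in (gl_comb L) = p + gl_r L"

definition layer_apply ::
  "gnn_layer \<Rightarrow> 'v set \<Rightarrow> ('v \<Rightarrow> 'v \<Rightarrow> bool) \<Rightarrow> ('v \<Rightarrow> real list) \<Rightarrow> 'v \<Rightarrow> real list" where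
  "layer_apply L V E x v =
     fnn_eval (gl_comb L)
       (x v @ agg_apply (gl_agg L) (gl_r L)
                (image_mset (\<lambda>w. fnn_eval (gl_msg L) (x v @ x w)) (mset_set (nbrs V E v))))"

end

theory Submission
  imports Defs
begin

declare fnn_val.simps [simp del]

lemma linf_nonneg: "0 \<le> linf xs"
  unfolding linf_def by (simp add: Max_ge_iff)

lemma linf_le_iff: "linf xs \<le> d \<longleftrightarrow> 0 \<le> d \<and> (\<forall>y\<in>set xs. \<bar>y\<bar> \<le> d)"
  unfolding linf_def by (auto simp: Max_le_iff)

lemma length_vsub: "length (vsub xs ys) = min (length xs) (length ys)"
  unfolding vsub_def by simp

lemma linf_vsub_le_iff:
  assumes "length xs = length ys"
  shows "linf (vsub xs ys) \<le> d \<longleftrightarrow> 0 \<le> d \<and> (\<forall>i<length xs. \<bar>xs!i - ys!i\<bar> \<le> d)"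
  using assms unfolding linf_le_iff vsub_def
  by (auto simp: set_zip)

lemma fnn_lip_aux:
  assumes wf: "wf_fnn N"
  shows "\<exists>K\<ge>0. \<forall>x x' (d::real) v. 0 \<le> d \<and> (\<forall>i<fnn_in N. \<bar>x i - x' i\<bar> \<le> d) \<and> v < n \<and> v < fnn_nodes N
           \<longrightarrow> \<bar>fnn_val N x v - fnn_val N x' v\<bar> \<le> K * d"
proof (induction n)
  case 0
  then show ?case by auto
next
  case (Suc n)
  then obtain K where K0: "K \<ge> 0" and K: "\<And>x x' (d::real) v. 0 \<le> d \<Longrightarrow> (\<forall>i<fnn_in N. \<bar>x i - x' i\<bar> \<le> d) \<Longrightarrow> v < n \<Longrightarrow> v < fnn_nodes N
           \<Longrightarrow> \<bar>fnn_val N x v - fnn_val N x' v\<bar> \<le> K * d" by blast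
  show ?case
  proof (cases "fnn_in N \<le> n \<and> n < fnn_nodes N")
    case False
    show ?thesis
    proof (intro exI[of _ "max K 1"] conjI allI impI)
      fix x x' and d :: real and v
      assume a: "0 \<le> d \<and> (\<forall>i<fnn_in N. \<bar>x i - x' i\<bar> \<le> d) \<and> v < Suc n \<and> v < fnn_nodes N"
      have m1: "K * d \<le> max K 1 * d" "1 * d \<le> max K 1 * d" using a by (intro mult_right_mono; simp)+
      then have m: "K * d \<le> max K 1 * d" "d \<le> max K 1 * d" by simp_all
      show "\<bar>fnn_val N x v - fnn_val N x' v\<bar> \<le> max K 1 * d"
      proof (cases "v < n")
        case True
        have "\<bar>fnn_val N x v - fnn_val N x' v\<bar> \<le> K * d" using K[of d x x' v] a True by blast
        then show ?thesis using m by linarith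
      next
        case f2: False
        then have "v = n" using a by auto
        then have "v < fnn_in N" using False a by auto
        then have "\<bar>fnn_val N x v - fnn_val N x' v\<bar> \<le> d" using a by (simp add: fnn_val.simps)
        then show ?thesis using m by linarith
      qed
    qed simp
  next
    case True
    then obtain C where C: "C-lipschitz_on UNIV (fnn_act N n)" using wf unfolding wf_fnn_def by blast
    have C0: "C \<ge> 0" using lipschitz_on_nonneg[OF C] .
    define S where "S = (\<Sum>u\<in>{..<n}. \<bar>fnn_wt N u n\<bar>)"
    have S0: "S \<ge> 0" unfolding S_def by (simp add: sum_nonneg)
    show ?thesis
    proof (intro exI[of _ "max K (C * S * K)"] conjI allI impI)
      fix x x' and d :: real and v
      assume a: "0 \<le> d \<and> (\<forall>i<fnn_in N. \<bar>x i - x' i\<bar> \<le> d) \<and> v < Suc n \<and> v < fnn_nodes N"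
      have m: "K * d \<le> max K (C * S * K) * d" "C * S * K * d \<le> max K (C * S * K) * d"
        using a by (intro mult_right_mono; simp)+
      show "\<bar>fnn_val N x v - fnn_val N x' v\<bar> \<le> max K (C * S * K) * d"
      proof (cases "v < n")
        case True
        have "\<bar>fnn_val N x v - fnn_val N x' v\<bar> \<le> K * d" using K[of d x x' v] a True by blast
        then show ?thesis using m by linarith
      next
        case f2: False
        then have vn: "v = n" using a by auto
        define F where "F = (\<lambda>y u. if fnn_edge N u n then fnn_wt N u n * fnn_val N y u else 0)"
        have e1: "fnn_val N y v = fnn_act N n (fnn_bias N n + (\<Sum>u\<in>{..<n}. F y u))" for y
          using True unfolding F_def vn by (subst fnn_val.simps) simp
        have tb: "\<bar>F x u - F x' u\<bar> \<le> \<bar>fnn_wt N u n\<bar> * (K * d)" if "u \<in> {..<n}" for u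
        proof (cases "fnn_edge N u n")
          case True
          have "\<bar>fnn_val N x u - fnn_val N x' u\<bar> \<le> K * d"
          proof -
            have "u < fnn_nodes N" using that a vn by auto
            then show ?thesis using K[of d x x' u] a that by auto
          qed
          then have "\<bar>fnn_wt N u n\<bar> * \<bar>fnn_val N x u - fnn_val N x' u\<bar> \<le> \<bar>fnn_wt N u n\<bar> * (K * d)"
            by (simp add: mult_left_mono)
          then show ?thesis using True unfolding F_def by (simp add: abs_mult right_diff_distrib[symmetric])
        next
          case False
          then show ?thesis unfolding F_def using K0 a by simp
        qed
        have "\<bar>(\<Sum>u\<in>{..<n}. F x u) - (\<Sum>u\<in>{..<n}. F x' u)\<bar> = \<bar>\<Sum>u\<in>{..<n}. F x u - F x' u\<bar>"
          by (simp add: sum_subtractf)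
        also have "\<dots> \<le> (\<Sum>u\<in>{..<n}. \<bar>F x u - F x' u\<bar>)" by (rule sum_abs)
        also have "\<dots> \<le> (\<Sum>u\<in>{..<n}. \<bar>fnn_wt N u n\<bar> * (K * d))" by (rule sum_mono) (rule tb)
        also have "\<dots> = S * K * d" unfolding S_def by (simp add: sum_distrib_right mult.assoc)
        finally have sb: "\<bar>(\<Sum>u\<in>{..<n}. F x u) - (\<Sum>u\<in>{..<n}. F x' u)\<bar> \<le> S * K * d" .
        have "\<bar>fnn_val N x v - fnn_val N x' v\<bar> \<le> C * \<bar>(fnn_bias N n + (\<Sum>u\<in>{..<n}. F x u)) - (fnn_bias N n + (\<Sum>u\<in>{..<n}. F x' u))\<bar>"
          using lipschitz_onD[OF C, of "fnn_bias N n + (\<Sum>u\<in>{..<n}. F x u)" "fnn_bias N n + (\<Sum>u\<in>{..<n}. F x' u)"]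
          unfolding e1 by (simp add: dist_real_def)
        also have "\<dots> \<le> C * (S * K * d)" using sb C0 by (simp add: mult_left_mono)
        finally show ?thesis using m by (simp add: mult.assoc)
      qed
    qed (use K0 C0 S0 in auto)
  qed
qed

lemma fnn_lip:
  assumes wf: "wf_fnn N"
  shows "\<exists>K\<ge>0. \<forall>xs ys. length xs = fnn_in N \<and> length ys = fnn_in N \<longrightarrow>
     linf (vsub (fnn_eval N xs) (fnn_eval N ys)) \<le> K * linf (vsub xs ys)"
proof -
  obtain K where K0: "K \<ge> 0" and K: "\<And>x x' (d::real) v. 0 \<le> d \<Longrightarrow> (\<forall>i<fnn_in N. \<bar>x i - x' i\<bar> \<le> d) \<Longrightarrow> v < fnn_nodes N \<Longrightarrow> v < fnn_nodes N
           \<Longrightarrow> \<bar>fnn_val N x v - fnn_val N x' v\<bar> \<le> K * d"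
    using fnn_lip_aux[OF wf, of "fnn_nodes N"] by blast
  show ?thesis
  proof (intro exI[of _ K] conjI allI impI K0)
    fix xs ys :: "real list"
    assume l: "length xs = fnn_in N \<and> length ys = fnn_in N"
    define d where "d = linf (vsub xs ys)"
    have d0: "0 \<le> d" unfolding d_def by (rule linf_nonneg)
    have di: "\<forall>i<fnn_in N. \<bar>xs!i - ys!i\<bar> \<le> d"
      using linf_vsub_le_iff[of xs ys d] l unfolding d_def by auto
    have outs: "\<forall>v\<in>set (fnn_outs N). v < fnn_nodes N" using wf unfolding wf_fnn_def by auto
    show "linf (vsub (fnn_eval N xs) (fnn_eval N ys)) \<le> K * d"
      unfolding fnn_eval_def
      apply (subst linf_vsub_le_iff)
      using K[of d "\<lambda>i. xs ! i" "\<lambda>i. ys ! i"] d0 di outs K0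
      by (auto simp: nth_mem)
  qed
qed

lemma comp_sum:
  assumes "finite S" "\<forall>w\<in>S. \<bar>F w - G w\<bar> \<le> (d::real)"
  shows "\<bar>sum F S - sum G S\<bar> \<le> real (card S) * d"
proof -
  have "\<bar>sum F S - sum G S\<bar> = \<bar>\<Sum>w\<in>S. F w - G w\<bar>" by (simp add: sum_subtractf)
  also have "\<dots> \<le> (\<Sum>w\<in>S. \<bar>F w - G w\<bar>)" by (rule sum_abs)
  also have "\<dots> \<le> (\<Sum>w\<in>S. d)" using assms by (intro sum_mono) auto
  finally show ?thesis by simp
qed

lemma comp_mean:
  assumes "finite S" "S \<noteq> {}" "\<forall>w\<in>S. \<bar>F w - G w\<bar> \<le> (d::real)"
  shows "\<bar>sum F S / real (card S) - sum G S / real (card S)\<bar> \<le> d"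
proof -
  have c: "real (card S) > 0" using assms by auto
  have "\<bar>sum F S / real (card S) - sum G S / real (card S)\<bar> = \<bar>sum F S - sum G S\<bar> / real (card S)"
    using c by (simp add: diff_divide_distrib[symmetric])
  also have "\<dots> \<le> real (card S) * d / real (card S)"
    using comp_sum[OF assms(1,3)] c by (intro divide_right_mono) auto
  also have "\<dots> = d" using c by simp
  finally show ?thesis .
qed

lemma comp_max:
  assumes "finite S" "S \<noteq> {}" "\<forall>w\<in>S. \<bar>F w - G w\<bar> \<le> (d::real)"
  shows "\<bar>Max (F ` S) - Max (G ` S)\<bar> \<le> d"
proof -
  have 1: "Max (F ` S) \<le> Max (G ` S) + d"
  proof -
    have "\<forall>w\<in>S. F w \<le> Max (G ` S) + d"
    proof
      fix w assume w: "w \<in> S"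
      have "G w \<le> Max (G ` S)" using assms w by auto
      then show "F w \<le> Max (G ` S) + d" using assms(3) w by force
    qed
    then show ?thesis using assms by (simp add: Max_le_iff)
  qed
  have 2: "Max (G ` S) \<le> Max (F ` S) + d"
  proof -
    have "\<forall>w\<in>S. G w \<le> Max (F ` S) + d"
    proof
      fix w assume w: "w \<in> S"
      have "F w \<le> Max (F ` S)" using assms w by auto
      then show "G w \<le> Max (F ` S) + d" using assms(3) w by force
    qed
    then show ?thesis using assms by (simp add: Max_le_iff)
  qed
  show ?thesis using 1 2 by linarith
qed

lemma agg_lip:
  fixes S :: "nat set"
  assumes S: "finite S" and len: "\<forall>w\<in>S. length (f w) = r \<and> length (g w) = r"
    and fg: "\<forall>w\<in>S. linf (vsub (f w) (g w)) \<le> d" and d0: "0 \<le> d"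
  shows "linf (vsub (agg_apply a r (image_mset f (mset_set S))) (agg_apply a r (image_mset g (mset_set S))))
          \<le> real (max (card S) 1) * d"
proof (cases "S = {}")
  case True
  then show ?thesis using d0 by (simp add: agg_apply_def linf_vsub_le_iff)
next
  case False
  have ne: "image_mset h (mset_set S) \<noteq> {#}" for h :: "nat \<Rightarrow> real list"
    using S False by (simp add: mset_set_empty_iff)
  have cS: "real (card S) * d \<le> real (max (card S) 1) * d" using d0 by (intro mult_right_mono) auto
  have d1: "d \<le> real (max (card S) 1) * d"
    using d0 mult_right_mono[of 1 "real (max (card S) 1)" d] by simp
  have pw: "\<forall>w\<in>S. \<bar>f w ! i - g w ! i\<bar> \<le> d" if "i < r" for i
    using len fg that by (auto simp: linf_vsub_le_iff)
  have cmp: "\<bar>(let C = image_mset (\<lambda>y. y ! i) (image_mset f (mset_set S)) in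
                 (case a of AggSum \<Rightarrow> sum_mset C
                          | AggMean \<Rightarrow> sum_mset C / real (size C)
                          | AggMax \<Rightarrow> Max (set_mset C))) -
             (let C = image_mset (\<lambda>y. y ! i) (image_mset g (mset_set S)) in
                 (case a of AggSum \<Rightarrow> sum_mset C
                          | AggMean \<Rightarrow> sum_mset C / real (size C)
                          | AggMax \<Rightarrow> Max (set_mset C)))\<bar> \<le> real (max (card S) 1) * d"
    if i: "i < r" for i
  proof -
    have e: "image_mset (\<lambda>y. y ! i) (image_mset h (mset_set S)) = image_mset (\<lambda>w. h w ! i) (mset_set S)"
      for h :: "nat \<Rightarrow> real list" by (simp add: multiset.map_comp comp_def)
    have sm: "sum_mset (image_mset (\<lambda>w. h w ! i) (mset_set S)) = (\<Sum>w\<in>S. h w ! i)"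
      for h :: "nat \<Rightarrow> real list" by (simp add: sum_unfold_sum_mset)
    have st: "set_mset (image_mset (\<lambda>w. h w ! i) (mset_set S)) = (\<lambda>w. h w ! i) ` S"
      for h :: "nat \<Rightarrow> real list" using S by simp
    show ?thesis
    proof (cases a)
      case AggSum
      then show ?thesis unfolding e Let_def using comp_sum[OF S pw[OF i]] cS by (simp add: sm)
    next
      case AggMean
      then show ?thesis unfolding e Let_def using comp_mean[OF S False pw[OF i]] d1 by (simp add: sm)
    next
      case AggMax
      then show ?thesis unfolding e Let_def using comp_max[OF S False pw[OF i]] d1 S by simp
    qed
  qed
  show ?thesis
    unfolding agg_apply_def using ne[of f] ne[of g]
    apply (simp only: if_False)
    apply (subst linf_vsub_le_iff)
     apply simp
    using cmp d0 by simp
qed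

lemma linf_vsub_comp:
  assumes "length xs = length ys" "i < length xs"
  shows "\<bar>xs!i - ys!i\<bar> \<le> linf (vsub xs ys)"
  using linf_vsub_le_iff[OF assms(1), of "linf (vsub xs ys)"] assms by simp

lemma linf_vsub_append:
  assumes "length a = length c" "length b = length e"
  shows "linf (vsub (a @ b) (c @ e)) \<le> max (linf (vsub a c)) (linf (vsub b e))"
proof (subst linf_vsub_le_iff)
  show "length (a @ b) = length (c @ e)" using assms by simp
  show "0 \<le> max (linf (vsub a c)) (linf (vsub b e)) \<and>
    (\<forall>i<length (a @ b). \<bar>(a @ b) ! i - (c @ e) ! i\<bar> \<le> max (linf (vsub a c)) (linf (vsub b e)))"
  proof (intro conjI allI impI)
    show "0 \<le> max (linf (vsub a c)) (linf (vsub b e))" using linf_nonneg by (simp add: le_max_iff_disj)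
    fix i assume i: "i < length (a @ b)"
    show "\<bar>(a @ b) ! i - (c @ e) ! i\<bar> \<le> max (linf (vsub a c)) (linf (vsub b e))"
    proof (cases "i < length a")
      case True
      then show ?thesis using linf_vsub_comp[OF assms(1) True] assms by (simp add: nth_append)
    next
      case False
      then have "i - length a < length b" using i by simp
      then show ?thesis using linf_vsub_comp[OF assms(2), of "i - length a"] assms False
        by (simp add: nth_append)
    qed
  qed
qed

lemma length_fnn_eval: "length (fnn_eval N xs) = length (fnn_outs N)"
  by (simp add: fnn_eval_def)

lemma length_agg_apply: "length (agg_apply a r M) = r"
  by (simp add: agg_apply_def)

lemma sig_dist_ge:
  assumes "finite W" "w \<in> W"
  shows "linf (vsub (x w) (x' w)) \<le> sig_dist W x x'"
  unfolding sig_dist_def using assms by (intro Max_ge) auto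

lemma sig_dist_nonneg: "finite W \<Longrightarrow> 0 \<le> sig_dist W x x'"
  unfolding sig_dist_def by (intro Max_ge) auto

lemma sig_dist_mono:
  assumes "finite W" "U \<subseteq> W"
  shows "sig_dist U x x' \<le> sig_dist W x x'"
  unfolding sig_dist_def using assms by (intro Max_mono) auto

theorem lemma4p3:
  fixes p :: nat and L :: gnn_layer
  assumes "gnn_layer_wf p L"
  shows "\<exists>lam::nat. lam > 0 \<and>
    (\<forall>(V :: nat set) E x x' v.
       graph V E \<and> signal V p x \<and> signal V p x' \<and> v \<in> V \<longrightarrow>
         linf (vsub (layer_apply L V E x v) (layer_apply L V E x' v))
           \<le> real lam * sig_dist (cnbrs V E v) x x' * real (max (deg V E v) 1) \<and>
         real lam * sig_dist (cnbrs V E v) x x' * real (max (deg V E v) 1)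
           \<le> real lam * sig_dist V x x' * real (card V))"
proof -
  have wf1: "wf_fnn (gl_msg L)" and wf2: "wf_fnn (gl_comb L)"
    and in1: "fnn_in (gl_msg L) = 2 * p" and in2: "fnn_in (gl_comb L) = p + gl_r L"
    using assms unfolding gnn_layer_wf_def by auto
  obtain K1 where K10: "K1 \<ge> 0" and K1: "\<And>xs ys. length xs = fnn_in (gl_msg L) \<Longrightarrow> length ys = fnn_in (gl_msg L) \<Longrightarrow>
     linf (vsub (fnn_eval (gl_msg L) xs) (fnn_eval (gl_msg L) ys)) \<le> K1 * linf (vsub xs ys)"
    using fnn_lip[OF wf1] by blast
  obtain K2 where K20: "K2 \<ge> 0" and K2: "\<And>xs ys. length xs = fnn_in (gl_comb L) \<Longrightarrow> length ys = fnn_in (gl_comb L) \<Longrightarrow>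
     linf (vsub (fnn_eval (gl_comb L) xs) (fnn_eval (gl_comb L) ys)) \<le> K2 * linf (vsub xs ys)"
    using fnn_lip[OF wf2] by blast
  define lam where "lam = nat \<lceil>K2 * max 1 K1\<rceil> + 1"
  have lam0: "lam > 0" unfolding lam_def by simp
  have lamK: "K2 * max 1 K1 \<le> real lam" unfolding lam_def
    using real_nat_ceiling_ge[of "K2 * max 1 K1"] by simp
  show ?thesis
  proof (intro exI[of _ lam] conjI lam0 allI impI)
    fix V :: "nat set" and E x x' v
    assume A: "graph V E \<and> signal V p x \<and> signal V p x' \<and> v \<in> V"
    have fV: "finite V" using A unfolding graph_def by auto
    have vV: "v \<in> V" using A by auto
    have NbV: "nbrs V E v \<subseteq> V - {v}" using A unfolding nbrs_def graph_def by auto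
    have cV: "cnbrs V E v \<subseteq> V" using NbV vV unfolding cnbrs_def by auto
    have fC: "finite (cnbrs V E v)" using cV fV finite_subset by blast
    have fN: "finite (nbrs V E v)" using NbV fV finite_subset by blast
    define d where "d = sig_dist (cnbrs V E v) x x'"
    define m where "m = real (max (deg V E v) 1)"
    have d0: "0 \<le> d" unfolding d_def using sig_dist_nonneg[OF fC] .
    have m1: "1 \<le> m" unfolding m_def by simp
    have dw: "linf (vsub (x w) (x' w)) \<le> d" if "w \<in> cnbrs V E v" for w
      unfolding d_def using sig_dist_ge[OF fC that] .
    have lx: "length (x w) = p" "length (x' w) = p" if "w \<in> V" for w
      using A that unfolding signal_def by auto
    have msg: "linf (vsub (fnn_eval (gl_msg L) (x v @ x w)) (fnn_eval (gl_msg L) (x' v @ x' w))) \<le> K1 * d"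
      if w: "w \<in> nbrs V E v" for w
    proof -
      have wV: "w \<in> V" using w NbV by auto
      have "linf (vsub (fnn_eval (gl_msg L) (x v @ x w)) (fnn_eval (gl_msg L) (x' v @ x' w)))
            \<le> K1 * linf (vsub (x v @ x w) (x' v @ x' w))"
        using lx[OF vV] lx[OF wV] in1 by (intro K1) auto
      also have "\<dots> \<le> K1 * d"
      proof (intro mult_left_mono K10)
        have "linf (vsub (x v @ x w) (x' v @ x' w)) \<le> max (linf (vsub (x v) (x' v))) (linf (vsub (x w) (x' w)))"
          using lx[OF vV] lx[OF wV] by (intro linf_vsub_append) auto
        moreover have "linf (vsub (x v) (x' v)) \<le> d" by (rule dw) (simp add: cnbrs_def)
        moreover have "linf (vsub (x w) (x' w)) \<le> d" by (rule dw) (use w in \<open>simp add: cnbrs_def\<close>)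
        ultimately show "linf (vsub (x v @ x w) (x' v @ x' w)) \<le> d" by linarith
      qed
      finally show ?thesis .
    qed
    define Ag where "Ag = (\<lambda>y. agg_apply (gl_agg L) (gl_r L)
                (image_mset (\<lambda>w. fnn_eval (gl_msg L) (y v @ y w)) (mset_set (nbrs V E v))))"
    have agg: "linf (vsub (Ag x) (Ag x')) \<le> m * (K1 * d)"
      unfolding Ag_def m_def deg_def
      using d0 K10 msg by (intro agg_lip fN) (auto simp: length_fnn_eval gl_r_def)
    have lA: "length (Ag y) = gl_r L" for y unfolding Ag_def by (simp add: length_agg_apply)
    have inp: "linf (vsub (x v @ Ag x) (x' v @ Ag x')) \<le> m * max 1 K1 * d"
    proof -
      have "linf (vsub (x v @ Ag x) (x' v @ Ag x')) \<le> max (linf (vsub (x v) (x' v))) (linf (vsub (Ag x) (Ag x')))"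
        using lx[OF vV] lA by (intro linf_vsub_append) auto
      moreover have "linf (vsub (x v) (x' v)) \<le> d" by (rule dw) (simp add: cnbrs_def)
      moreover have "d \<le> m * max 1 K1 * d"
      proof -
        have "1 \<le> m * max 1 K1" using m1 by (metis max.cobounded1 mult_mono' mult_1 zero_le_one order_trans)
        then show ?thesis using d0 mult_right_mono[of 1 "m * max 1 K1" d] by simp
      qed
      moreover have "m * (K1 * d) \<le> m * max 1 K1 * d"
        using m1 d0 by (simp add: mult.assoc mult_left_mono mult_right_mono)
      ultimately show ?thesis using agg by linarith
    qed
    have "linf (vsub (layer_apply L V E x v) (layer_apply L V E x' v)) \<le> K2 * linf (vsub (x v @ Ag x) (x' v @ Ag x'))"
    proof -
      have la: "layer_apply L V E y v = fnn_eval (gl_comb L) (y v @ Ag y)" for y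
        unfolding layer_apply_def Ag_def by simp
      show ?thesis unfolding la using lx[OF vV] lA in2 by (intro K2) auto
    qed
    also have "\<dots> \<le> K2 * (m * max 1 K1 * d)" using inp K20 by (rule mult_left_mono)
    also have "\<dots> = (K2 * max 1 K1) * (d * m)" by (simp add: algebra_simps)
    also have "\<dots> \<le> real lam * (d * m)" using lamK d0 m1 by (intro mult_right_mono) auto
    finally show "linf (vsub (layer_apply L V E x v) (layer_apply L V E x' v))
           \<le> real lam * sig_dist (cnbrs V E v) x x' * real (max (deg V E v) 1)"
      unfolding d_def m_def by (simp add: mult.assoc)
    have dd: "d \<le> sig_dist V x x'" unfolding d_def using sig_dist_mono[OF fV cV] .
    have "card (nbrs V E v) \<le> card (V - {v})" using NbV fV by (intro card_mono) auto
    moreover have "card V \<ge> 1" using fV vV by (metis One_nat_def Suc_leI card_gt_0_iff empty_iff)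
    ultimately have mc: "m \<le> real (card V)" unfolding m_def deg_def using fV vV by auto
    have "real lam * d * m \<le> real lam * sig_dist V x x' * real (card V)"
      using dd mc d0 m1 by (intro mult_mono) auto
    then show "real lam * sig_dist (cnbrs V E v) x x' * real (max (deg V E v) 1)
           \<le> real lam * sig_dist V x x' * real (card V)" unfolding d_def m_def .
  qed
qed

end
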